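(* Let $(\mathfrak g,\mathfrak g^* )$ be a Hom-Lie bialgebra, with Hom-Lie algebras $(\mathfrak{g},[\cdot,\cdot]_{\mathfrak{g}},\phi_{\mathfrak{g}})$ and $(\mathfrak g^*,[\cdot,\cdot]_{\mathfrak g^*},\phi_{\mathfrak g}^* )$. Then $(\mathfrak g\oplus\mathfrak g^*,[\cdot,\cdot]_d,\phi_{\mathfrak g}\oplus\phi_{\mathfrak g}^* )$, where $[x+a,y+b]_d=[x,y]_{\mathfrak g}+\mathrm{ad}^\circ_xb-\mathrm{ad}^\circ_ya+[a,b]_{\mathfrak g^*}+\mathfrak{ad}^\circ_ay-\mathfrak{ad}^\circ_bx$, is a weakly involutive Hom-Lie algebra.
   Context: $\mathfrak g$ is finite-dimensional. A Hom-Lie algebra $(\mathfrak{h},[\cdot,\cdot]_{\mathfrak{h}},\phi_{\mathfrak{h}})$: skew-symmetric bilinear bracket and linear map with $\phi_{\mathfrak h}[x,y]=[\phi_{\mathfrak h}x,\phi_{\mathfrak h}y]$ and $[\phi_{\mathfrak h}(x),[y,z]]+[\phi_{\mathfrak h}(y),[z,x]]+[\phi_{\mathfrak h}(z),[x,y]]=0$; weakly involutive if $[\phi_{\mathfrak h}^2(x),y]=[x,y]$. For $z\in\mathfrak g$, $t\in\mathfrak g\otimes\mathfrak g$: $\mathrm{ad}_zt=(\mathrm{ad}_z\otimes\phi_{\mathfrak g}+\phi_{\mathfrak g}\otimes\mathrm{ad}_z)t$, $\mathrm{ad}_zy=[z,y]_{\mathfrak g}$. A Hom-Lie bialgebra $(\mathfrak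 g,\mathfrak g^* )$ is a pair of weakly involutive Hom-Lie algebras $(\mathfrak{g},[\cdot,\cdot]_{\mathfrak{g}},\phi_{\mathfrak{g}})$ and $(\mathfrak g^*,[\cdot,\cdot]_{\mathfrak g^*},\phi_{\mathfrak g}^* )$ such that $\Delta:\mathfrak g\to\mathfrak g\otimes\mathfrak g$, $\langle\Delta(x),a\otimes b\rangle=\langle x,[a,b]_{\mathfrak g^*}\rangle$, satisfies $\Delta[x,y]_{\mathfrak g}=\mathrm{ad}_{\phi_{\mathfrak g}(x)}\Delta(y)-\mathrm{ad}_{\phi_{\mathfrak g}(y)}\Delta(x)$. $\mathrm{ad}^\circ_xa\in\mathfrak g^*$: $\langle\mathrm{ad}^\circ_xa,y\rangle=-\langle a,[\phi_{\mathfrak g}(x),y]_{\mathfrak g}\rangle$; $\mathfrak{ad}^\circ_ax\in\mathfrak g$: $\langle\mathfrak{ad}^\circ_ax,b\rangle=-\langle x,[\phi_{\mathfrak g}^*(a),b]_{\mathfrak g^*}\rangle$. *)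

theory Defs
  imports Main
begin

text \<open>A finite-dimensional vector space over a field 'k is represented in coordinates
  as 'i \<Rightarrow> 'k with 'i a finite index type. The dual space of 'n \<Rightarrow> 'k is again
  'n \<Rightarrow> 'k via the pairing below; g \<otimes> g is 'n \<Rightarrow> 'n \<Rightarrow> 'k; g \<oplus> g* is ('n + 'n) \<Rightarrow> 'k.\<close>

definition vadd :: "('i \<Rightarrow> 'k::field) \<Rightarrow> ('i \<Rightarrow> 'k) \<Rightarrow> 'i \<Rightarrow> 'k" where
  "vadd x y = (\<lambda>i. x i + y i)"
definition vsub :: "('i \<Rightarrow> 'k::field) \<Rightarrow> ('i \<Rightarrow> 'k) \<Rightarrow> 'i \<Rightarrow> 'k" where
  "vsub x y = (\<lambda>i. x i - y i)"
definition vneg :: "('i \<Rightarrow> 'k::field) \<Rightarrow> 'i \<Rightarrow> 'k" where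
  "vneg x = (\<lambda>i. - x i)"
definition vsmul :: "'k::field \<Rightarrow> ('i \<Rightarrow> 'k) \<Rightarrow> 'i \<Rightarrow> 'k" where
  "vsmul c x = (\<lambda>i. c * x i)"
definition vzero :: "'i \<Rightarrow> 'k::field" where
  "vzero = (\<lambda>i. 0)"

definition linmap :: "(('i \<Rightarrow> 'k::field) \<Rightarrow> ('j \<Rightarrow> 'k)) \<Rightarrow> bool" where
  "linmap f \<longleftrightarrow> (\<forall>x y. f (vadd x y) = vadd (f x) (f y)) \<and> (\<forall>c x. f (vsmul c x) = vsmul c (f x))"

definition bilinear_map :: "(('i \<Rightarrow> 'k::field) \<Rightarrow> ('i \<Rightarrow> 'k) \<Rightarrow> ('i \<Rightarrow> 'k)) \<Rightarrow> bool" where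
  "bilinear_map B \<longleftrightarrow> (\<forall>y. linmap (\<lambda>x. B x y)) \<and> (\<forall>x. linmap (\<lambda>y. B x y))"

definition hom_lie_algebra ::
  "(('i \<Rightarrow> 'k::field) \<Rightarrow> ('i \<Rightarrow> 'k) \<Rightarrow> ('i \<Rightarrow> 'k)) \<Rightarrow> (('i \<Rightarrow> 'k) \<Rightarrow> ('i \<Rightarrow> 'k)) \<Rightarrow> bool" where
  "hom_lie_algebra br phi \<longleftrightarrow>
     bilinear_map br \<and> (\<forall>x y. br x y = vneg (br y x)) \<and> linmap phi \<and>
     (\<forall>x y. phi (br x y) = br (phi x) (phi y)) \<and>
     (\<forall>x y z. vadd (vadd (br (phi x) (br y z)) (br (phi y) (br z x))) (br (phi z) (br x y)) = vzero)"

definition weakly_involutive ::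
  "(('i \<Rightarrow> 'k::field) \<Rightarrow> ('i \<Rightarrow> 'k) \<Rightarrow> ('i \<Rightarrow> 'k)) \<Rightarrow> (('i \<Rightarrow> 'k) \<Rightarrow> ('i \<Rightarrow> 'k)) \<Rightarrow> bool" where
  "weakly_involutive br phi \<longleftrightarrow> (\<forall>x y. br (phi (phi x)) y = br x y)"

definition pairing :: "('n::finite \<Rightarrow> 'k::field) \<Rightarrow> ('n \<Rightarrow> 'k) \<Rightarrow> 'k" where
  "pairing x a = (\<Sum>i\<in>UNIV. x i * a i)"

definition unitv :: "'n \<Rightarrow> 'n \<Rightarrow> 'k::field" where
  "unitv i = (\<lambda>j. if j = i then 1 else 0)"

text \<open>Dual map: pairing (dual_map phi a) x = pairing (phi x) a for linear phi.\<close>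
definition dual_map :: "(('n::finite \<Rightarrow> 'k::field) \<Rightarrow> ('n \<Rightarrow> 'k)) \<Rightarrow> ('n \<Rightarrow> 'k) \<Rightarrow> 'n \<Rightarrow> 'k" where
  "dual_map phi a = (\<lambda>j. \<Sum>i\<in>UNIV. a i * phi (unitv j) i)"

text \<open>Tensors in g \<otimes> g as coefficient matrices; (A \<otimes> B) t.\<close>
definition tadd :: "('n \<Rightarrow> 'n \<Rightarrow> 'k::field) \<Rightarrow> ('n \<Rightarrow> 'n \<Rightarrow> 'k) \<Rightarrow> 'n \<Rightarrow> 'n \<Rightarrow> 'k" where
  "tadd s t = (\<lambda>p q. s p q + t p q)"
definition tsub :: "('n \<Rightarrow> 'n \<Rightarrow> 'k::field) \<Rightarrow> ('n \<Rightarrow> 'n \<Rightarrow> 'k) \<Rightarrow> 'n \<Rightarrow> 'n \<Rightarrow> 'k" where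
  "tsub s t = (\<lambda>p q. s p q - t p q)"

definition tensor_map ::
  "(('n::finite \<Rightarrow> 'k::field) \<Rightarrow> ('n \<Rightarrow> 'k)) \<Rightarrow> (('n \<Rightarrow> 'k) \<Rightarrow> ('n \<Rightarrow> 'k)) \<Rightarrow> ('n \<Rightarrow> 'n \<Rightarrow> 'k) \<Rightarrow> 'n \<Rightarrow> 'n \<Rightarrow> 'k" where
  "tensor_map A B t = (\<lambda>p q. \<Sum>i\<in>UNIV. \<Sum>j\<in>UNIV. t i j * A (unitv i) p * B (unitv j) q)"

definition ad_tensor ::
  "(('n::finite \<Rightarrow> 'k::field) \<Rightarrow> ('n \<Rightarrow> 'k) \<Rightarrow> ('n \<Rightarrow> 'k)) \<Rightarrow> (('n \<Rightarrow> 'k) \<Rightarrow> ('n \<Rightarrow> 'k))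
    \<Rightarrow> ('n \<Rightarrow> 'k) \<Rightarrow> ('n \<Rightarrow> 'n \<Rightarrow> 'k) \<Rightarrow> 'n \<Rightarrow> 'n \<Rightarrow> 'k" where
  "ad_tensor br phi z t = tadd (tensor_map (br z) phi t) (tensor_map phi (br z) t)"

text \<open>Delta: <Delta x, a \<otimes> b> = <x, [a,b]_*>; coefficients w.r.t. the standard basis.\<close>
definition cobracket ::
  "(('n::finite \<Rightarrow> 'k::field) \<Rightarrow> ('n \<Rightarrow> 'k) \<Rightarrow> ('n \<Rightarrow> 'k)) \<Rightarrow> ('n \<Rightarrow> 'k) \<Rightarrow> 'n \<Rightarrow> 'n \<Rightarrow> 'k" where
  "cobracket brd x = (\<lambda>i j. pairing x (brd (unitv i) (unitv j)))"

definition hom_lie_bialgebra ::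
  "(('n::finite \<Rightarrow> 'k::field) \<Rightarrow> ('n \<Rightarrow> 'k) \<Rightarrow> ('n \<Rightarrow> 'k)) \<Rightarrow> (('n \<Rightarrow> 'k) \<Rightarrow> ('n \<Rightarrow> 'k))
    \<Rightarrow> (('n \<Rightarrow> 'k) \<Rightarrow> ('n \<Rightarrow> 'k) \<Rightarrow> ('n \<Rightarrow> 'k)) \<Rightarrow> bool" where
  "hom_lie_bialgebra br phi brd \<longleftrightarrow>
     hom_lie_algebra br phi \<and> weakly_involutive br phi \<and>
     hom_lie_algebra brd (dual_map phi) \<and> weakly_involutive brd (dual_map phi) \<and>
     (\<forall>x y. cobracket brd (br x y) =
        tsub (ad_tensor br phi (phi x) (cobracket brd y)) (ad_tensor br phi (phi y) (cobracket brd x)))"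

text \<open><ad_circ x a, y> = - <a, [phi x, y]>.\<close>
definition ad_circ ::
  "(('n::finite \<Rightarrow> 'k::field) \<Rightarrow> ('n \<Rightarrow> 'k) \<Rightarrow> ('n \<Rightarrow> 'k)) \<Rightarrow> (('n \<Rightarrow> 'k) \<Rightarrow> ('n \<Rightarrow> 'k))
    \<Rightarrow> ('n \<Rightarrow> 'k) \<Rightarrow> ('n \<Rightarrow> 'k) \<Rightarrow> 'n \<Rightarrow> 'k" where
  "ad_circ br phi x a = (\<lambda>j. - pairing (br (phi x) (unitv j)) a)"

text \<open><ad_circ_dual a x, b> = - <x, [phi* a, b]_*>.\<close>
definition ad_circ_dual ::
  "(('n::finite \<Rightarrow> 'k::field) \<Rightarrow> ('n \<Rightarrow> 'k) \<Rightarrow> ('n \<Rightarrow> 'k)) \<Rightarrow> (('n \<Rightarrow> 'k) \<Rightarrow> ('n \<Rightarrow> 'k))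
    \<Rightarrow> ('n \<Rightarrow> 'k) \<Rightarrow> ('n \<Rightarrow> 'k) \<Rightarrow> 'n \<Rightarrow> 'k" where
  "ad_circ_dual brd phi a x = (\<lambda>j. - pairing x (brd (dual_map phi a) (unitv j)))"

definition gpart :: "('n + 'n \<Rightarrow> 'k) \<Rightarrow> 'n \<Rightarrow> 'k" where
  "gpart u = (\<lambda>i. u (Inl i))"
definition dpart :: "('n + 'n \<Rightarrow> 'k) \<Rightarrow> 'n \<Rightarrow> 'k" where
  "dpart u = (\<lambda>i. u (Inr i))"
definition dsum :: "('n \<Rightarrow> 'k) \<Rightarrow> ('n \<Rightarrow> 'k) \<Rightarrow> 'n + 'n \<Rightarrow> 'k" where
  "dsum x a = case_sum x a"

definition double_bracket ::
  "(('n::finite \<Rightarrow> 'k::field) \<Rightarrow> ('n \<Rightarrow> 'k) \<Rightarrow> ('n \<Rightarrow> 'k)) \<Rightarrow> (('n \<Rightarrow> 'k) \<Rightarrow> ('n \<Rightarrow> 'k))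
    \<Rightarrow> (('n \<Rightarrow> 'k) \<Rightarrow> ('n \<Rightarrow> 'k) \<Rightarrow> ('n \<Rightarrow> 'k)) \<Rightarrow> ('n + 'n \<Rightarrow> 'k) \<Rightarrow> ('n + 'n \<Rightarrow> 'k) \<Rightarrow> 'n + 'n \<Rightarrow> 'k" where
  "double_bracket br phi brd u v =
     (let x = gpart u; a = dpart u; y = gpart v; b = dpart v in
      dsum (vsub (vadd (br x y) (ad_circ_dual brd phi a y)) (ad_circ_dual brd phi b x))
           (vadd (vsub (ad_circ br phi x b) (ad_circ br phi y a)) (brd a b)))"

definition double_phi ::
  "(('n::finite \<Rightarrow> 'k::field) \<Rightarrow> ('n \<Rightarrow> 'k)) \<Rightarrow> ('n + 'n \<Rightarrow> 'k) \<Rightarrow> 'n + 'n \<Rightarrow> 'k" where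
  "double_phi phi u = dsum (phi (gpart u)) (dual_map phi (dpart u))"

end

theory Submission
  imports Defs
begin


lemma vadd_apply[simp]: "vadd x y i = x i + y i" by (simp add: vadd_def)
lemma vsub_apply[simp]: "vsub x y i = x i - y i" by (simp add: vsub_def)
lemma vneg_apply[simp]: "vneg x i = - x i" by (simp add: vneg_def)
lemma vsmul_apply[simp]: "vsmul c x i = c * x i" by (simp add: vsmul_def)
lemma vzero_apply[simp]: "vzero i = 0" by (simp add: vzero_def)

lemma vadd_zero[simp]: "vadd x vzero = x" "vadd vzero x = x" by (auto simp: fun_eq_iff)
lemma vsub_zero[simp]: "vsub x vzero = x" "vsub vzero x = vneg x" by (auto simp: fun_eq_iff)
lemma vneg_zero[simp]: "vneg vzero = vzero" "vneg (vneg x) = x" by (auto simp: fun_eq_iff)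

lemma lin_add: "linmap f \<Longrightarrow> f (vadd x y) = vadd (f x) (f y)" by (simp add: linmap_def)
lemma lin_smul: "linmap f \<Longrightarrow> f (vsmul c x) = vsmul c (f x)" by (simp add: linmap_def)
lemma lin_zero: "linmap f \<Longrightarrow> f vzero = vzero"
proof -
  assume f: "linmap f"
  have "vzero = vsmul 0 (vzero::'a \<Rightarrow> 'b)" by (simp add: fun_eq_iff)
  hence "f vzero = vsmul 0 (f vzero)" using lin_smul[OF f] by metis
  thus ?thesis by (simp add: fun_eq_iff)
qed
lemma lin_neg: "linmap f \<Longrightarrow> f (vneg x) = vneg (f x)"
proof -
  assume f: "linmap f"
  have e: "vneg x = vsmul (-1) x" by (simp add: fun_eq_iff)
  have "f (vneg x) = vsmul (-1) (f x)" by (subst e) (rule lin_smul[OF f])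
  thus ?thesis by (simp add: fun_eq_iff)
qed
lemma lin_sub: "linmap f \<Longrightarrow> f (vsub x y) = vsub (f x) (f y)"
proof -
  assume f: "linmap f"
  have e: "vsub x y = vadd x (vneg y)" by (simp add: fun_eq_iff)
  have "f (vsub x y) = vadd (f x) (f (vneg y))" by (subst e) (rule lin_add[OF f])
  thus ?thesis using lin_neg[OF f] by (simp add: fun_eq_iff)
qed

lemma lin_sum_aux:
  assumes f: "linmap f" and S: "finite S"
  shows "f (\<lambda>i. \<Sum>j\<in>S. c j * e j i) = (\<lambda>p. \<Sum>j\<in>S. c j * f (e j) p)"
  using S
proof (induction S rule: finite_induct)
  case empty
  show ?case using lin_zero[OF f] unfolding vzero_def by simp
next
  case (insert a S)
  have "(\<lambda>i. \<Sum>j\<in>insert a S. c j * e j i) = vadd (vsmul (c a) (e a)) (\<lambda>i. \<Sum>j\<in>S. c j * e j i)"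
    using insert by (simp add: fun_eq_iff)
  then have "f (\<lambda>i. \<Sum>j\<in>insert a S. c j * e j i) = vadd (vsmul (c a) (f (e a))) (f (\<lambda>i. \<Sum>j\<in>S. c j * e j i))"
    by (simp only: lin_add[OF f] lin_smul[OF f])
  also have "\<dots> = (\<lambda>p. \<Sum>j\<in>insert a S. c j * f (e j) p)"
    unfolding insert.IH using insert.hyps by (simp add: fun_eq_iff)
  finally show ?case .
qed

lemma unitv_apply: "unitv j i = (if i = j then 1 else 0)" by (simp add: unitv_def)

lemma expand_vec: "(x::'n::finite \<Rightarrow> 'k::field) = (\<lambda>i. \<Sum>j\<in>UNIV. x j * unitv j i)"
proof (rule ext)
  fix i
  have "\<And>j. x j * unitv j i = (if i = j then x j else 0)" by (simp add: unitv_apply)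
  thus "x i = (\<Sum>j\<in>UNIV. x j * unitv j i)" by simp
qed

lemma lin_expand:
  fixes x :: "'n::finite \<Rightarrow> 'k::field"
  assumes f: "linmap f"
  shows "f x = (\<lambda>p. \<Sum>j\<in>UNIV. x j * f (unitv j) p)"
  using lin_sum_aux[OF f, of UNIV x unitv] expand_vec[of x] by simp

lemma pairing_comm: "pairing x a = pairing a x" by (simp add: pairing_def mult.commute)
lemma pairing_vadd1[simp]: "pairing (vadd x y) a = pairing x a + pairing y a"
  by (simp add: pairing_def algebra_simps sum.distrib)
lemma pairing_vadd2[simp]: "pairing a (vadd x y) = pairing a x + pairing a y"
  by (simp add: pairing_def algebra_simps sum.distrib)
lemma pairing_vsub1[simp]: "pairing (vsub x y) a = pairing x a - pairing y a"
  by (simp add: pairing_def algebra_simps sum_subtractf)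
lemma pairing_vsub2[simp]: "pairing a (vsub x y) = pairing a x - pairing a y"
  by (simp add: pairing_def algebra_simps sum_subtractf)
lemma pairing_vneg1[simp]: "pairing (vneg x) a = - pairing x a"
  by (simp add: pairing_def sum_negf)
lemma pairing_vneg2[simp]: "pairing a (vneg x) = - pairing a x"
  by (simp add: pairing_def sum_negf)
lemma pairing_vzero[simp]: "pairing vzero a = 0" "pairing a vzero = 0"
  by (simp_all add: pairing_def)
lemma pairing_unitv: "pairing x (unitv j) = x j"
proof -
  have "\<And>i. x i * unitv j i = (if j = i then x i else 0)" by (simp add: unitv_apply)
  thus ?thesis by (simp add: pairing_def)
qed

lemma pairing_ext: "(\<And>a. pairing x a = pairing y a) \<Longrightarrow> x = y"
  by (metis pairing_unitv ext)
lemma pairing_ext0: "(\<And>a. pairing x a = 0) \<Longrightarrow> x = vzero"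
  by (rule pairing_ext) simp

lemma pairing_lin:
  fixes y :: "'n::finite \<Rightarrow> 'k::field"
  assumes f: "linmap f"
  shows "pairing (f y) a = (\<Sum>j\<in>UNIV. y j * pairing (f (unitv j)) a)"
  apply (subst lin_expand[OF f])
  apply (simp add: pairing_def sum_distrib_left sum_distrib_right mult.assoc)
  apply (rule sum.swap)
  done

lemma dual_adj:
  assumes f: "linmap f"
  shows "pairing (f x) a = pairing x (dual_map f a)"
  apply (subst pairing_lin[OF f, of x a]) by (simp add: pairing_def dual_map_def sum_distrib_left mult.commute)

lemma pairing_ext2: "(\<And>y. pairing y u = pairing y v) \<Longrightarrow> u = v"
  by (rule pairing_ext) (metis pairing_comm)

definition tp :: "('n::finite \<Rightarrow> 'n \<Rightarrow> 'k::field) \<Rightarrow> ('n \<Rightarrow> 'k) \<Rightarrow> ('n \<Rightarrow> 'k) \<Rightarrow> 'k" where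
  "tp t a b = (\<Sum>p\<in>UNIV. \<Sum>q\<in>UNIV. t p q * a p * b q)"

lemma tp_tadd: "tp (tadd s t) a b = tp s a b + tp t a b"
  by (simp add: tp_def tadd_def algebra_simps sum.distrib)
lemma tp_tsub: "tp (tsub s t) a b = tp s a b - tp t a b"
  by (simp add: tp_def tsub_def algebra_simps sum_subtractf)

lemma tp_tm: "tp (tensor_map A B t) a b = tp t (dual_map A a) (dual_map B b)"
proof -
  have "tp (tensor_map A B t) a b =
     (\<Sum>p\<in>UNIV. \<Sum>q\<in>UNIV. \<Sum>i\<in>UNIV. \<Sum>j\<in>UNIV. t i j * (a p * A (unitv i) p) * (b q * B (unitv j) q))"
    by (simp add: tp_def tensor_map_def sum_distrib_left sum_distrib_right mult_ac)
  also have "\<dots> = (\<Sum>p\<in>UNIV. \<Sum>i\<in>UNIV. \<Sum>q\<in>UNIV. \<Sum>j\<in>UNIV. t i j * (a p * A (unitv i) p) * (b q * B (unitv j) q))"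
    by (rule sum.cong[OF refl], rule sum.swap)
  also have "\<dots> = (\<Sum>i\<in>UNIV. \<Sum>p\<in>UNIV. \<Sum>q\<in>UNIV. \<Sum>j\<in>UNIV. t i j * (a p * A (unitv i) p) * (b q * B (unitv j) q))"
    by (rule sum.swap)
  also have "\<dots> = (\<Sum>i\<in>UNIV. \<Sum>p\<in>UNIV. \<Sum>j\<in>UNIV. \<Sum>q\<in>UNIV. t i j * (a p * A (unitv i) p) * (b q * B (unitv j) q))"
    by (rule sum.cong[OF refl], rule sum.cong[OF refl], rule sum.swap)
  also have "\<dots> = (\<Sum>i\<in>UNIV. \<Sum>j\<in>UNIV. \<Sum>p\<in>UNIV. \<Sum>q\<in>UNIV. t i j * (a p * A (unitv i) p) * (b q * B (unitv j) q))"
    by (rule sum.cong[OF refl], rule sum.swap)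
  also have "\<dots> = tp t (dual_map A a) (dual_map B b)"
    by (simp add: tp_def dual_map_def sum_distrib_left sum_distrib_right mult_ac)
  finally show ?thesis .
qed

lemma tp_cob:
  fixes brd :: "('n::finite \<Rightarrow> 'k::field) \<Rightarrow> ('n \<Rightarrow> 'k) \<Rightarrow> ('n \<Rightarrow> 'k)"
  assumes "bilinear_map brd"
  shows "tp (cobracket brd x) a b = pairing x (brd a b)"
proof -
  have l1: "linmap (\<lambda>a. brd a b)" and l2: "\<And>a. linmap (brd a)" using assms by (auto simp: bilinear_map_def)
  have "pairing x (brd a b) = pairing (brd a b) x" by (rule pairing_comm)
  also have "\<dots> = (\<Sum>p\<in>UNIV. a p * pairing (brd (unitv p) b) x)"
    using pairing_lin[OF l1, of a x] by simp
  also have "\<dots> = (\<Sum>p\<in>UNIV. a p * (\<Sum>q\<in>UNIV. b q * pairing (brd (unitv p) (unitv q)) x))"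
  proof (rule sum.cong[OF refl])
    fix p
    show "a p * pairing (brd (unitv p) b) x = a p * (\<Sum>q\<in>UNIV. b q * pairing (brd (unitv p) (unitv q)) x)"
      using pairing_lin[OF l2[of "unitv p"], where y=b and a=x] by simp
  qed
  also have "\<dots> = tp (cobracket brd x) a b"
    by (simp add: tp_def cobracket_def sum_distrib_left mult_ac pairing_comm[of x])
  finally show ?thesis by simp
qed



locale bialg =
  fixes br :: "('n::finite \<Rightarrow> 'k::field) \<Rightarrow> ('n \<Rightarrow> 'k) \<Rightarrow> ('n \<Rightarrow> 'k)"
    and phi :: "('n \<Rightarrow> 'k) \<Rightarrow> ('n \<Rightarrow> 'k)"
    and brd :: "('n \<Rightarrow> 'k) \<Rightarrow> ('n \<Rightarrow> 'k) \<Rightarrow> ('n \<Rightarrow> 'k)"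
  assumes hb: "hom_lie_bialgebra br phi brd"
begin

abbreviation "ps \<equiv> dual_map phi"
abbreviation "adc \<equiv> ad_circ br phi"
abbreviation "adcd \<equiv> ad_circ_dual brd phi"

lemma bil: "bilinear_map br" and skew: "br x y = vneg (br y x)" and lphi: "linmap phi"
  and mult: "phi (br x y) = br (phi x) (phi y)"
  and jac: "vadd (vadd (br (phi x) (br y z)) (br (phi y) (br z x))) (br (phi z) (br x y)) = vzero"
  and wi: "br (phi (phi x)) y = br x y"
  and bild: "bilinear_map brd" and skewd: "brd a b = vneg (brd b a)" and lps: "linmap ps"
  and multd: "ps (brd a b) = brd (ps a) (ps b)"
  and jacd: "vadd (vadd (brd (ps a) (brd b c)) (brd (ps b) (brd c a))) (brd (ps c) (brd a b)) = vzero"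
  and wid: "brd (ps (ps a)) b = brd a b"
  and cocyc: "cobracket brd (br x y) =
        tsub (ad_tensor br phi (phi x) (cobracket brd y)) (ad_tensor br phi (phi y) (cobracket brd x))"
  using hb unfolding hom_lie_bialgebra_def hom_lie_algebra_def weakly_involutive_def by blast+

lemma l1: "linmap (\<lambda>x. br x y)" and l2: "linmap (br x)"
  and l1d: "linmap (\<lambda>a. brd a b)" and l2d: "linmap (brd a)"
  using bil bild by (auto simp: bilinear_map_def)

lemma br_simps[simp]: "br (vneg x) y = vneg (br x y)" "br x (vneg y) = vneg (br x y)"
  "br vzero y = vzero" "br x vzero = vzero"
  "br (vadd x x') y = vadd (br x y) (br x' y)" "br x (vadd y y') = vadd (br x y) (br x y')"
  "br (vsub x x') y = vsub (br x y) (br x' y)" "br x (vsub y y') = vsub (br x y) (br x y')"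
  using lin_neg[OF l1] lin_neg[OF l2] lin_zero[OF l1] lin_zero[OF l2]
    lin_add[OF l1] lin_add[OF l2] lin_sub[OF l1] lin_sub[OF l2] by auto
lemma brd_simps[simp]: "brd (vneg x) y = vneg (brd x y)" "brd x (vneg y) = vneg (brd x y)"
  "brd vzero y = vzero" "brd x vzero = vzero"
  "brd (vadd x x') y = vadd (brd x y) (brd x' y)" "brd x (vadd y y') = vadd (brd x y) (brd x y')"
  "brd (vsub x x') y = vsub (brd x y) (brd x' y)" "brd x (vsub y y') = vsub (brd x y) (brd x y')"
  using lin_neg[OF l1d] lin_neg[OF l2d] lin_zero[OF l1d] lin_zero[OF l2d]
    lin_add[OF l1d] lin_add[OF l2d] lin_sub[OF l1d] lin_sub[OF l2d] by auto
lemma phi_simps[simp]: "phi (vneg x) = vneg (phi x)" "phi vzero = vzero"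
  "phi (vadd x y) = vadd (phi x) (phi y)" "phi (vsub x y) = vsub (phi x) (phi y)"
  "ps (vneg a) = vneg (ps a)" "ps vzero = vzero"
  "ps (vadd a b) = vadd (ps a) (ps b)" "ps (vsub a b) = vsub (ps a) (ps b)"
  using lin_neg[OF lphi] lin_zero[OF lphi] lin_add[OF lphi] lin_sub[OF lphi]
   lin_neg[OF lps] lin_zero[OF lps] lin_add[OF lps] lin_sub[OF lps] by auto

lemma wi2: "br x (phi (phi y)) = br x y"
  by (metis skew wi)
lemma wid2: "brd a (ps (ps b)) = brd a b"
  by (metis skewd wid)

lemma adj: "pairing (phi x) a = pairing x (ps a)"
  by (rule dual_adj[OF lphi])

lemma adc_pair: "pairing y (adc x a) = - pairing (br (phi x) y) a"
proof -
  have "pairing y (adc x a) = (\<Sum>j\<in>UNIV. y j * - pairing (br (phi x) (unitv j)) a)"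
    by (simp add: ad_circ_def pairing_def[of y])
  also have "\<dots> = - pairing (br (phi x) y) a"
    using pairing_lin[OF l2, of "phi x" y a] by (simp add: sum_negf)
  finally show ?thesis .
qed

lemma adcd_pair: "pairing (adcd a x) b = - pairing x (brd (ps a) b)"
proof -
  have "pairing (adcd a x) b = (\<Sum>j\<in>UNIV. b j * - pairing (brd (ps a) (unitv j)) x)"
    unfolding ad_circ_dual_def by (subst pairing_def) (simp add: pairing_comm[of x] mult.commute)
  also have "\<dots> = - pairing (brd (ps a) b) x"
    using pairing_lin[OF l2d, of "ps a" b x] by (simp add: sum_negf)
  finally show ?thesis by (simp add: pairing_comm)
qed

lemma adc_simps[simp]: "adc x vzero = vzero" "adc vzero a = vzero"
  "adc x (vneg a) = vneg (adc x a)" "adc (vneg x) a = vneg (adc x a)"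
  "adc x (vadd a b) = vadd (adc x a) (adc x b)" "adc (vadd x y) a = vadd (adc x a) (adc y a)"
  "adc x (vsub a b) = vsub (adc x a) (adc x b)" "adc (vsub x y) a = vsub (adc x a) (adc y a)"
  by (rule pairing_ext2; simp add: adc_pair algebra_simps)+

lemma adcd_simps[simp]: "adcd a vzero = vzero" "adcd vzero x = vzero"
  "adcd a (vneg x) = vneg (adcd a x)" "adcd (vneg a) x = vneg (adcd a x)"
  "adcd a (vadd x y) = vadd (adcd a x) (adcd a y)" "adcd (vadd a b) x = vadd (adcd a x) (adcd b x)"
  "adcd a (vsub x y) = vsub (adcd a x) (adcd a y)" "adcd (vsub a b) x = vsub (adcd a x) (adcd b x)"
  by (rule pairing_ext; simp add: adcd_pair algebra_simps)+

lemma D1: "ps (adc x a) = adc (phi x) (ps a)"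
proof (rule pairing_ext2)
  fix y
  have "pairing y (ps (adc x a)) = pairing (phi y) (adc x a)" by (simp add: adj)
  also have "\<dots> = - pairing (phi (br x y)) a" by (simp add: adc_pair mult)
  also have "\<dots> = pairing y (adc (phi x) (ps a))" by (simp add: adc_pair wi adj)
  finally show "pairing y (ps (adc x a)) = pairing y (adc (phi x) (ps a))" .
qed

lemma D2: "phi (adcd a x) = adcd (ps a) (phi x)"
proof (rule pairing_ext)
  fix b
  have "pairing (phi (adcd a x)) b = - pairing x (brd (ps a) (ps b))" by (simp add: adj adcd_pair)
  also have "\<dots> = - pairing (phi x) (brd a b)" by (simp add: adj multd)
  also have "\<dots> = pairing (adcd (ps a) (phi x)) b" by (simp add: adcd_pair wid)
  finally show "pairing (phi (adcd a x)) b = pairing (adcd (ps a) (phi x)) b" .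
qed

lemma W1: "adc (phi (phi x)) a = adc x a"
  by (simp add: ad_circ_def wi)
lemma W3: "adcd (ps (ps a)) x = adcd a x"
  by (simp add: ad_circ_dual_def wid)
lemma W2: "adc x (ps (ps a)) = adc x a"
proof (rule pairing_ext2)
  fix y
  have "pairing y (adc x (ps (ps a))) = - pairing (phi (phi (br (phi x) y))) a" by (simp add: adc_pair adj)
  also have "\<dots> = - pairing (br (phi x) y) a" by (simp add: mult wi wi2)
  also have "\<dots> = pairing y (adc x a)" by (simp add: adc_pair)
  finally show "pairing y (adc x (ps (ps a))) = pairing y (adc x a)" .
qed
lemma W4: "adcd a (phi (phi x)) = adcd a x"
proof (rule pairing_ext)
  fix b
  have "pairing (adcd a (phi (phi x))) b = - pairing x (ps (ps (brd (ps a) b)))" by (simp add: adcd_pair adj)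
  also have "\<dots> = - pairing x (brd (ps a) b)" by (simp add: multd wid wid2)
  also have "\<dots> = pairing (adcd a x) b" by (simp add: adcd_pair)
  finally show "pairing (adcd a (phi (phi x))) b = pairing (adcd a x) b" .
qed

lemma dual_br: "dual_map (br (phi x)) a = vneg (adc x a)"
  by (simp add: dual_map_def ad_circ_def fun_eq_iff pairing_def mult.commute)

lemma C: "pairing (br x y) (brd a b) =
   - pairing y (brd (adc x a) (ps b)) - pairing y (brd (ps a) (adc x b))
   + pairing x (brd (adc y a) (ps b)) + pairing x (brd (ps a) (adc y b))"
proof -
  have "pairing (br x y) (brd a b) = tp (cobracket brd (br x y)) a b"
    by (simp add: tp_cob[OF bild])
  also have "\<dots> = - pairing y (brd (adc x a) (ps b)) - pairing y (brd (ps a) (adc x b))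
   + pairing x (brd (adc y a) (ps b)) + pairing x (brd (ps a) (adc y b))"
    unfolding cocyc tp_tsub ad_tensor_def tp_tadd tp_tm dual_br tp_cob[OF bild]
    by simp
  finally show ?thesis .
qed

end


lemma gpart_dsum[simp]: "gpart (dsum x a) = x" and dpart_dsum[simp]: "dpart (dsum x a) = a"
  by (simp_all add: gpart_def dpart_def dsum_def)
lemma dsum_eq_iff: "dsum x a = dsum y b \<longleftrightarrow> x = y \<and> a = b"
  by (metis gpart_dsum dpart_dsum)
lemma dsum_ops[simp]: "vadd (dsum x a) (dsum y b) = dsum (vadd x y) (vadd a b)"
  "vsub (dsum x a) (dsum y b) = dsum (vsub x y) (vsub a b)"
  "vneg (dsum x a) = dsum (vneg x) (vneg a)"
  "vsmul c (dsum x a) = dsum (vsmul c x) (vsmul c a)"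
  by (auto simp: dsum_def fun_eq_iff split: sum.split)
lemma dsum_zero: "vzero = dsum vzero vzero"
  by (auto simp: dsum_def fun_eq_iff split: sum.split)
lemma dsum_eq_zero[simp]: "dsum x a = vzero \<longleftrightarrow> x = vzero \<and> a = vzero"
  by (metis dsum_zero dsum_eq_iff)
lemma dsum_split: "u = dsum (gpart u) (dpart u)"
  by (auto simp: dsum_def gpart_def dpart_def fun_eq_iff split: sum.split)

definition Jt where
  "Jt B P u v w = vadd (vadd (B (P u) (B v w)) (B (P v) (B w u))) (B (P w) (B u v))"

lemma Jt_cyc: "Jt B P u v w = Jt B P v w u"
  by (simp add: Jt_def fun_eq_iff algebra_simps)

lemma Jt_add1:
  assumes B: "bilinear_map B" and P: "linmap P"
  shows "Jt B P (vadd u u') v w = vadd (Jt B P u v w) (Jt B P u' v w)"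
proof -
  have l1: "\<And>y. linmap (\<lambda>x. B x y)" and l2: "\<And>x. linmap (B x)" using B by (auto simp: bilinear_map_def)
  show ?thesis
    unfolding Jt_def lin_add[OF P] lin_add[OF l1] lin_add[OF l2]
    by (simp add: fun_eq_iff algebra_simps)
qed

context bialg begin

abbreviation "db \<equiv> double_bracket br phi brd"
abbreviation "dp \<equiv> double_phi phi"

lemma db_dsum[simp]: "db (dsum x a) (dsum y b) =
   dsum (vsub (vadd (br x y) (adcd a y)) (adcd b x)) (vadd (vsub (adc x b) (adc y a)) (brd a b))"
  by (simp add: double_bracket_def Let_def)
lemma dp_dsum[simp]: "dp (dsum x a) = dsum (phi x) (ps a)"
  by (simp add: double_phi_def)

lemma adc_pair': "pairing (adc x a) y = - pairing (br (phi x) y) a"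
  using adc_pair pairing_comm by metis
lemma brpair: "pairing (br (phi x) w) b = - pairing w (adc x b)"
  by (simp add: adc_pair)
lemma PP1: "ps (ps (adc y c)) = adc y c"
  by (simp add: D1 W1 W2)
lemma PP2: "phi (phi (adcd c x)) = adcd c x"
  by (simp add: D2 W3 W4)
lemma adcdphi: "pairing (adcd e (phi x)) b = - pairing x (brd (ps (ps e)) (ps b))"
  by (simp add: adcd_pair adj multd)

lemma J_ggg: "Jt db dp (dsum x vzero) (dsum y vzero) (dsum z vzero) = vzero"
  using jac[of x y z] by (simp add: Jt_def)

lemma J_ddd: "Jt db dp (dsum vzero a) (dsum vzero b) (dsum vzero c) = vzero"
  using jacd[of a b c] by (simp add: Jt_def)

lemma J_ggd: "Jt db dp (dsum x vzero) (dsum y vzero) (dsum vzero c) = vzero"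
proof -
  have G: "vadd
      (vadd (vsub (vneg (br (phi x) (adcd c y))) (adcd (adc y c) (phi x)))
        (vsub (br (phi y) (adcd c x)) (vneg (adcd (adc x c) (phi y)))))
      (adcd (ps c) (br x y)) = vzero"
  proof (rule pairing_ext0)
    fix b
    have f1: "pairing (br (phi x) (adcd c y)) b = pairing y (brd (ps c) (adc x b))"
      by (simp add: brpair adcd_pair)
    have f2: "pairing (adcd (adc y c) (phi x)) b = - pairing x (brd (adc y c) (ps b))"
      by (simp add: adcdphi PP1)
    have f3: "pairing (br (phi y) (adcd c x)) b = pairing x (brd (ps c) (adc y b))"
      by (simp add: brpair adcd_pair)
    have f4: "pairing (adcd (adc x c) (phi y)) b = - pairing y (brd (adc x c) (ps b))"
      by (simp add: adcdphi PP1)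
    have f5: "pairing (adcd (ps c) (br x y)) b = - pairing (br x y) (brd c b)"
      by (simp add: adcd_pair wid)
    show "pairing (vadd
      (vadd (vsub (vneg (br (phi x) (adcd c y))) (adcd (adc y c) (phi x)))
        (vsub (br (phi y) (adcd c x)) (vneg (adcd (adc x c) (phi y)))))
      (adcd (ps c) (br x y))) b = 0"
      using C[of x y c b] by (simp add: f1 f2 f3 f4 f5 algebra_simps)
  qed
  have D: "vadd (vadd (adc (phi x) (adc y c)) (vneg (adc (phi y) (adc x c))))
      (vneg (adc (br x y) (ps c))) = vzero"
  proof (rule pairing_ext0)
    fix t
    have f1: "pairing (adc (phi x) (adc y c)) t = - pairing (br (phi y) (br t x)) c"
      by (simp add: adc_pair' wi adc_pair skew[of x t])
    have f2: "pairing (adc (phi y) (adc x c)) t = pairing (br (phi x) (br y t)) c"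
      by (simp add: adc_pair' wi adc_pair)
    have f3: "pairing (adc (br x y) (ps c)) t = pairing (br (phi t) (br x y)) c"
      by (simp add: adc_pair' adj[symmetric] mult wi wi2 skew[of "br x y" "phi t"])
    have j: "pairing (vadd (vadd (br (phi x) (br y t)) (br (phi y) (br t x))) (br (phi t) (br x y))) c = 0"
      using jac[of x y t] by simp
    show "pairing (vadd (vadd (adc (phi x) (adc y c)) (vneg (adc (phi y) (adc x c))))
      (vneg (adc (br x y) (ps c)))) t = 0"
      using j apply (simp add: f1 f2 f3)
      by algebra
  qed
  show ?thesis using G D by (simp add: Jt_def)
qed

lemma J_gdd: "Jt db dp (dsum x vzero) (dsum vzero b) (dsum vzero c) = vzero"
proof -
  have G: "vadd (vadd (vneg (adcd (brd b c) (phi x))) (adcd (ps b) (adcd c x)))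
      (vneg (adcd (ps c) (adcd b x))) = vzero"
  proof (rule pairing_ext0)
    fix d
    have f1: "pairing (adcd (brd b c) (phi x)) d = pairing x (brd (ps d) (brd b c))"
      by (simp add: adcdphi wid skewd[of "brd b c" "ps d"])
    have f2: "pairing (adcd (ps b) (adcd c x)) d = - pairing x (brd (ps c) (brd d b))"
      by (simp add: adcd_pair wid skewd[of b d])
    have f3: "pairing (adcd (ps c) (adcd b x)) d = pairing x (brd (ps b) (brd c d))"
      by (simp add: adcd_pair wid)
    have j: "pairing x (vadd (vadd (brd (ps b) (brd c d)) (brd (ps c) (brd d b))) (brd (ps d) (brd b c))) = 0"
      using jacd[of b c d] by simp
    show "pairing (vadd (vadd (vneg (adcd (brd b c) (phi x))) (adcd (ps b) (adcd c x)))
      (vneg (adcd (ps c) (adcd b x)))) d = 0"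
      using j apply (simp add: f1 f2 f3)
      by algebra
  qed
  have D: "vadd
      (vadd (adc (phi x) (brd b c))
        (vadd (vneg (adc (adcd c x) (ps b))) (vneg (brd (ps b) (adc x c)))))
      (vadd (adc (adcd b x) (ps c)) (brd (ps c) (adc x b))) = vzero"
  proof (rule pairing_ext0)
    fix y
    have f1: "pairing (adc (phi x) (brd b c)) y = - pairing (br x y) (brd b c)"
      by (simp add: adc_pair' wi)
    have f2: "pairing (adc (adcd c x) (ps b)) y = pairing x (brd (ps c) (adc y b))"
    proof -
      have "pairing (adc (adcd c x) (ps b)) y = - pairing (br (phi (phi (adcd c x))) (phi y)) b"
        by (simp add: adc_pair' adj[symmetric] mult)
      also have "\<dots> = pairing (br (phi y) (adcd c x)) b"
        by (simp add: PP2 skew[of "adcd c x" "phi y"])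
      also have "\<dots> = pairing x (brd (ps c) (adc y b))"
        by (simp add: brpair adcd_pair)
      finally show ?thesis .
    qed
    have f3: "pairing (adc (adcd b x) (ps c)) y = pairing x (brd (ps b) (adc y c))"
    proof -
      have "pairing (adc (adcd b x) (ps c)) y = - pairing (br (phi (phi (adcd b x))) (phi y)) c"
        by (simp add: adc_pair' adj[symmetric] mult)
      also have "\<dots> = pairing (br (phi y) (adcd b x)) c"
        by (simp add: PP2 skew[of "adcd b x" "phi y"])
      also have "\<dots> = pairing x (brd (ps b) (adc y c))"
        by (simp add: brpair adcd_pair)
      finally show ?thesis .
    qed
    have s1: "pairing y (brd (adc x b) (ps c)) = - pairing y (brd (ps c) (adc x b))"
      by (simp add: skewd[of "adc x b"])
    have s2: "pairing x (brd (adc y b) (ps c)) = - pairing x (brd (ps c) (adc y b))"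
      by (simp add: skewd[of "adc y b"])
    show "pairing (vadd
      (vadd (adc (phi x) (brd b c))
        (vadd (vneg (adc (adcd c x) (ps b))) (vneg (brd (ps b) (adc x c)))))
      (vadd (adc (adcd b x) (ps c)) (brd (ps c) (adc x b)))) y = 0"
      using C[of x y b c] s1 s2 by (simp add: f1 f2 f3 pairing_comm[of "brd _ _" y] algebra_simps)
  qed
  show ?thesis using G D by (simp add: Jt_def)
qed


lemma Jt_add2:
  assumes B: "bilinear_map B" and P: "linmap P"
  shows "Jt B P u (vadd v v') w = vadd (Jt B P u v w) (Jt B P u v' w)"
proof -
  have "Jt B P u (vadd v v') w = Jt B P (vadd v v') w u" by (rule Jt_cyc)
  also have "\<dots> = vadd (Jt B P v w u) (Jt B P v' w u)" by (rule Jt_add1[OF B P])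
  also have "\<dots> = vadd (Jt B P u v w) (Jt B P u v' w)" using Jt_cyc[of B P u v w] Jt_cyc[of B P u v' w] by simp
  finally show ?thesis .
qed
lemma Jt_add3:
  assumes B: "bilinear_map B" and P: "linmap P"
  shows "Jt B P u v (vadd w w') = vadd (Jt B P u v w) (Jt B P u v w')"
proof -
  have "Jt B P u v (vadd w w') = Jt B P (vadd w w') u v" using Jt_cyc[of B P u v] Jt_cyc[of B P v] by simp
  also have "\<dots> = vadd (Jt B P w u v) (Jt B P w' u v)" by (rule Jt_add1[OF B P])
  also have "\<dots> = vadd (Jt B P u v w) (Jt B P u v w')" using Jt_cyc[of B P u v] Jt_cyc[of B P v] by simp
  finally show ?thesis .
qed

lemma pairing_vsmul[simp]: "pairing (vsmul c x) a = c * pairing x a" "pairing a (vsmul c x) = c * pairing a x"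
  by (simp_all add: pairing_def sum_distrib_left mult_ac)

lemma smul_simps[simp]: "br (vsmul c x) y = vsmul c (br x y)" "br x (vsmul c y) = vsmul c (br x y)"
  "brd (vsmul c a) b = vsmul c (brd a b)" "brd a (vsmul c b) = vsmul c (brd a b)"
  "phi (vsmul c x) = vsmul c (phi x)" "ps (vsmul c a) = vsmul c (ps a)"
  using lin_smul[OF l1] lin_smul[OF l2] lin_smul[OF l1d] lin_smul[OF l2d] lin_smul[OF lphi] lin_smul[OF lps]
  by auto
lemma adc_smul[simp]: "adc (vsmul c x) a = vsmul c (adc x a)" "adc x (vsmul c a) = vsmul c (adc x a)"
  by (rule pairing_ext2; simp add: adc_pair)+
lemma adcd_smul[simp]: "adcd (vsmul c a) x = vsmul c (adcd a x)" "adcd a (vsmul c x) = vsmul c (adcd a x)"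
  by (rule pairing_ext; simp add: adcd_pair)+

lemma gd_ops[simp]: "gpart (vadd u v) = vadd (gpart u) (gpart v)" "dpart (vadd u v) = vadd (dpart u) (dpart v)"
  "gpart (vsmul c u) = vsmul c (gpart u)" "dpart (vsmul c u) = vsmul c (dpart u)"
  "gpart (vneg u) = vneg (gpart u)" "dpart (vneg u) = vneg (dpart u)"
  by (simp_all add: gpart_def dpart_def fun_eq_iff)

lemma db_def': "db u v = db (dsum (gpart u) (dpart u)) (dsum (gpart v) (dpart v))"
  using dsum_split[of u] dsum_split[of v] by simp

lemma db_skew: "db u v = vneg (db v u)"
  apply (subst (1 2) db_def')
  apply (simp add: dsum_eq_iff)
  apply (subst skew[of "gpart u"], subst skewd[of "dpart u"])
  by (simp add: fun_eq_iff)

lemma db_add1: "db (vadd u u') v = vadd (db u v) (db u' v)"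
  apply (subst (1 2 3) db_def')
  apply (simp add: dsum_eq_iff)
  by (simp add: fun_eq_iff algebra_simps)
lemma db_smul1: "db (vsmul c u) v = vsmul c (db u v)"
  apply (subst (1 2) db_def')
  apply (simp add: dsum_eq_iff)
  by (simp add: fun_eq_iff algebra_simps)
lemma db_add2: "db u (vadd v v') = vadd (db u v) (db u v')"
proof -
  have "db u (vadd v v') = vneg (db (vadd v v') u)" by (rule db_skew)
  also have "\<dots> = vneg (vadd (db v u) (db v' u))" by (simp add: db_add1)
  also have "\<dots> = vadd (db u v) (db u v')" using db_skew[of u v] db_skew[of u v'] by (simp add: fun_eq_iff)
  finally show ?thesis .
qed
lemma db_smul2: "db u (vsmul c v) = vsmul c (db u v)"
  apply (subst (1 2) db_skew)
  by (simp add: db_smul1 fun_eq_iff)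

lemma db_bil: "bilinear_map db"
  unfolding bilinear_map_def linmap_def by (simp add: db_add1 db_add2 db_smul1 db_smul2)

lemma dp_lin: "linmap dp"
  unfolding linmap_def double_phi_def by simp

lemma dp_mult: "dp (db u v) = db (dp u) (dp v)"
  apply (subst (1 2) db_def')
  by (simp add: double_phi_def mult multd D1 D2)

lemma decomp: "u = vadd (dsum (gpart u) vzero) (dsum vzero (dpart u))"
  by (subst (1) dsum_split) simp

lemma J_all: "Jt db dp u v w = vzero"
proof -
  note A = Jt_add1[OF db_bil dp_lin] Jt_add2[OF db_bil dp_lin] Jt_add3[OF db_bil dp_lin]
  have c1: "\<And>x b z. Jt db dp (dsum x vzero) (dsum vzero b) (dsum z vzero) = vzero"
    by (subst Jt_cyc, subst Jt_cyc, rule J_ggd)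
  have c2: "\<And>a y z. Jt db dp (dsum vzero a) (dsum y vzero) (dsum z vzero) = vzero"
    by (subst Jt_cyc, rule J_ggd)
  have c3: "\<And>a y c. Jt db dp (dsum vzero a) (dsum y vzero) (dsum vzero c) = vzero"
    by (subst Jt_cyc, rule J_gdd)
  have c4: "\<And>a b z. Jt db dp (dsum vzero a) (dsum vzero b) (dsum z vzero) = vzero"
    by (subst Jt_cyc, subst Jt_cyc, rule J_gdd)
  show ?thesis
    apply (subst decomp[of u], subst decomp[of v], subst decomp[of w])
    by (simp only: A c1 c2 c3 c4 J_ggg J_ggd J_gdd J_ddd vadd_zero)
qed

lemma double_hom_lie: "hom_lie_algebra db dp"
  unfolding hom_lie_algebra_def
  using db_bil db_skew dp_lin dp_mult J_all unfolding Jt_def by blast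

lemma double_wi: "weakly_involutive db dp"
  unfolding weakly_involutive_def
proof (intro allI)
  fix u v
  show "db (dp (dp u)) v = db u v"
    apply (subst (1 2) db_def')
    by (simp add: double_phi_def wi W1 W2 W3 W4 wid)
qed

end

theorem corollary3p10:
  fixes br :: "('n::finite \<Rightarrow> 'k::field) \<Rightarrow> ('n \<Rightarrow> 'k) \<Rightarrow> ('n \<Rightarrow> 'k)"
    and phi :: "('n \<Rightarrow> 'k) \<Rightarrow> ('n \<Rightarrow> 'k)"
    and brd :: "('n \<Rightarrow> 'k) \<Rightarrow> ('n \<Rightarrow> 'k) \<Rightarrow> ('n \<Rightarrow> 'k)"
  assumes "hom_lie_bialgebra br phi brd"
  shows "hom_lie_algebra (double_bracket br phi brd) (double_phi phi)
       \<and> weakly_involutive (double_bracket br phi brd) (double_phi phi)"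
proof -
  interpret bialg br phi brd using assms by unfold_locales
  show ?thesis using double_hom_lie double_wi by blast
qed

end
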